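(* Let $c>0$, let $N$ be a positive integer, and let $\psi$ be an alternating step function of height $c$ and order $N$. Then there is a finite Blaschke product $\omega$ of order $N$ such that $\psi=\frac{2c}{\pi}\operatorname{Arg}\left(\frac{1+\omega}{1-\omega}\right)$ (a.e.) on $\mathbb{T}$.
   Context: $\mathbb{T}$ is the unit circle; $\operatorname{Arg}$ denotes the principal value of the argument. For $c>0$ and $N$ a positive integer, an alternating step function of height $c$ and order $N$ is a function in $L^\infty(\mathbb{T})$ that assumes (a.e.) alternately the values $c$ and $-c$ on $2N$ (nondegenerate) subarcs forming a partition of $\mathbb{T}$. *)

theory Defs
  imports "HOL-Analysis.Analysis"
begin

text \<open>Points of the unit circle are parametrized as cis t, t real; "a.e. on the circle"
  is expressed as "for Lebesgue-almost every real t" (cis is a 2pi-periodic local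
  bi-Lipschitz parametrization, so null sets correspond).\<close>

definition blaschke_factor :: "complex \<Rightarrow> complex \<Rightarrow> complex" where
  "blaschke_factor a z = (z - a) / (1 - cnj a * z)"

definition finite_blaschke_product :: "nat \<Rightarrow> (complex \<Rightarrow> complex) \<Rightarrow> bool" where
  "finite_blaschke_product N \<omega> \<longleftrightarrow>
     (\<exists>lam a. norm lam = 1 \<and> (\<forall>k<N. norm (a k) < 1) \<and>
        \<omega> = (\<lambda>z. lam * (\<Prod>k<N. blaschke_factor (a k) z)))"

text \<open>An alternating step function of height c and order N: there are parameters
  t 0 < t 1 < ... < t (2N) = t 0 + 2 pi (so the arcs cis ` (t j, t (j+1)) are 2N
  nondegenerate arcs partitioning the circle up to endpoints) such that psi takes
  alternately the values c and -c a.e. on consecutive arcs.\<close>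
definition alternating_step_function :: "real \<Rightarrow> nat \<Rightarrow> (complex \<Rightarrow> real) \<Rightarrow> bool" where
  "alternating_step_function c N \<psi> \<longleftrightarrow>
     (\<exists>t :: nat \<Rightarrow> real.
        (\<forall>j<2*N. t j < t (Suc j)) \<and> t (2*N) = t 0 + 2*pi \<and>
        (AE s in lborel. \<forall>j<2*N. t j < s \<and> s < t (Suc j) \<longrightarrow>
              \<psi> (cis s) = (-1) ^ j * c))"

end

theory Submission
  imports Defs "HOL-Computational_Algebra.Fundamental_Theorem_Algebra"
begin

definition DD :: "(nat \<Rightarrow> complex) \<Rightarrow> nat set \<Rightarrow> (nat \<Rightarrow> complex) \<Rightarrow> complex" where
  "DD a A f = (\<Sum>k\<in>A. f k / (\<Prod>l\<in>A-{k}. (a k - a l)))"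

lemma DD_shift:
  assumes fin: "finite A" and inj: "inj_on a A" and k0: "k0 \<in> A"
  shows "DD a A (\<lambda>k. (a k - a k0) * g k) = DD a (A - {k0}) g"
proof -
  have "DD a A (\<lambda>k. (a k - a k0) * g k) = (\<Sum>k\<in>A-{k0}. (a k - a k0) * g k / (\<Prod>l\<in>A-{k}. (a k - a l)))"
    unfolding DD_def using fin k0 by (simp add: sum.remove)
  also have "\<dots> = (\<Sum>k\<in>A-{k0}. g k / (\<Prod>l\<in>A-{k0}-{k}. (a k - a l)))"
  proof (rule sum.cong[OF refl])
    fix k assume k: "k \<in> A - {k0}"
    have ne: "a k - a k0 \<noteq> 0" using inj k k0 by (auto dest: inj_onD)
    have "A - {k} = insert k0 (A - {k0} - {k})" using k k0 by auto
    hence "(\<Prod>l\<in>A-{k}. (a k - a l)) = (a k - a k0) * (\<Prod>l\<in>A-{k0}-{k}. (a k - a l))"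
      using fin by simp
    thus "(a k - a k0) * g k / (\<Prod>l\<in>A-{k}. (a k - a l)) = g k / (\<Prod>l\<in>A-{k0}-{k}. (a k - a l))"
      using ne by simp
  qed
  finally show ?thesis unfolding DD_def .
qed

lemma DD_lin:
  "DD a A (\<lambda>k. x * f k + y * g k) = x * DD a A f + y * DD a A g"
  unfolding DD_def by (simp add: sum.distrib sum_distrib_left add_divide_distrib algebra_simps)

lemma DD_const:
  assumes "finite A" "inj_on a A" "card A \<ge> 1"
  shows "DD a A (\<lambda>_. 1) = (if card A = 1 then 1 else 0)"
  using assms
proof (induction "card A" arbitrary: A rule: less_induct)
  case less
  show ?case
  proof (cases "card A = 1")
    case True
    then obtain x where "A = {x}" by (auto simp: card_Suc_eq)
    thus ?thesis by (simp add: DD_def)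
  next
    case False
    with less have "card A \<ge> 2" by auto
    then obtain k0 k1 where k: "k0 \<in> A" "k1 \<in> A" "k0 \<noteq> k1"
    proof -
      have "\<not> card A \<le> 1" using \<open>card A \<ge> 2\<close> by simp
      hence "\<exists>x\<in>A. \<exists>y\<in>A. x \<noteq> y" using card_le_Suc0_iff_eq[OF less.prems(1)] by auto
      thus ?thesis using that by blast
    qed
    have ne: "a k1 - a k0 \<noteq> 0" using less.prems k by (auto dest: inj_onD)
    have eq: "(\<lambda>_::nat. 1::complex) = (\<lambda>k. (1 / (a k1 - a k0)) * ((a k - a k0) * 1) + (- 1 / (a k1 - a k0)) * ((a k - a k1) * 1))"
    proof (rule ext)
      fix k
      have "(1 / (a k1 - a k0)) * ((a k - a k0) * 1) + (- 1 / (a k1 - a k0)) * ((a k - a k1) * 1) = ((a k - a k0) - (a k - a k1)) / (a k1 - a k0)"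
        by (simp add: field_simps)
      also have "\<dots> = 1" using ne by (metis (no_types, lifting) add_diff_cancel_left diff_add_cancel diff_diff_eq2 divide_self)
      finally show "1 = (1 / (a k1 - a k0)) * ((a k - a k0) * 1) + (- 1 / (a k1 - a k0)) * ((a k - a k1) * 1)" by simp
    qed
    have "DD a A (\<lambda>_. 1) = (1 / (a k1 - a k0)) * DD a A (\<lambda>k. (a k - a k0) * 1) + (- 1 / (a k1 - a k0)) * DD a A (\<lambda>k. (a k - a k1) * 1)"
      by (subst eq) (rule DD_lin)
    also have "\<dots> = (1 / (a k1 - a k0)) * DD a (A - {k0}) (\<lambda>_. 1) + (- 1 / (a k1 - a k0)) * DD a (A-{k1}) (\<lambda>_. 1)"
      using less.prems k DD_shift[of A a k0 "\<lambda>_. 1"] DD_shift[of A a k1 "\<lambda>_. 1"] by simp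
    also have "DD a (A - {k0}) (\<lambda>_. 1) = DD a (A - {k1}) (\<lambda>_. 1)"
    proof -
      have c: "card (A - {k0}) = card A - 1" "card (A - {k1}) = card A - 1" using k less.prems by auto
      have i: "inj_on a (A - {k0})" "inj_on a (A - {k1})" using less.prems by (auto intro: inj_on_subset)
      have "card A - 1 < card A" "card A - 1 \<ge> 1" using \<open>card A \<ge> 2\<close> by auto
      thus ?thesis using less.hyps c i less.prems(1) by (metis finite_Diff)
    qed
    finally show ?thesis using False by (simp add: field_simps)
  qed
qed

lemma DD_prod:
  assumes "finite B" "finite A" "inj_on a A" "card B + 1 \<le> card A"
  shows "DD a A (\<lambda>k. \<Prod>i\<in>B. (a k - b i)) = (if card B + 1 = card A then 1 else 0)"
  using assms
proof (induction B arbitrary: A rule: finite_induct)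
  case empty
  thus ?case using DD_const[of A a] by simp
next
  case (insert i B)
  then obtain k0 where k0: "k0 \<in> A" by fastforce
  have eq: "(\<lambda>k. \<Prod>i\<in>insert i B. (a k - b i)) = (\<lambda>k. 1 * ((a k - a k0) * (\<Prod>i\<in>B. (a k - b i))) + (a k0 - b i) * (\<Prod>i\<in>B. (a k - b i)))"
    using insert by (auto simp: algebra_simps)
  have "DD a A (\<lambda>k. \<Prod>i\<in>insert i B. (a k - b i)) = DD a (A - {k0}) (\<lambda>k. \<Prod>i\<in>B. (a k - b i)) + (a k0 - b i) * DD a A (\<lambda>k. \<Prod>i\<in>B. (a k - b i))"
    by (subst eq, subst DD_lin) (use insert k0 DD_shift[of A a k0 "\<lambda>k. \<Prod>i\<in>B. (a k - b i)"] in simp)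
  also have "DD a A (\<lambda>k. \<Prod>i\<in>B. (a k - b i)) = 0"
    using insert.IH[of A] insert.prems insert.hyps by simp
  also have "DD a (A - {k0}) (\<lambda>k. \<Prod>i\<in>B. (a k - b i)) = (if card B + 1 = card (A - {k0}) then 1 else 0)"
    using insert.IH[of "A - {k0}"] insert.prems insert.hyps k0 inj_on_subset[of a A "A - {k0}"] by auto
  finally show ?case using insert.hyps insert.prems k0 by auto
qed



lemma one_minus_cos_pos:
  fixes x :: real assumes "0 < x" "x < 2*pi" shows "1 - cos x > 0"
proof -
  have "cos x = cos (2 * (x/2))" by simp
  also have "\<dots> = 1 - 2 * (sin (x/2))^2" by (rule cos_double_sin)
  finally have e: "1 - cos x = 2 * (sin (x/2))^2" by simp
  have "sin (x/2) > 0" using assms by (intro sin_gt_zero) auto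
  thus ?thesis using e by simp
qed

lemma cis_diff_aux: "cis (u + v) - cis (u - v) = 2 * \<i> * complex_of_real (sin v) * cis u"
  by (simp add: complex_eq_iff sin_add sin_diff cos_add cos_diff algebra_simps)

lemma cis_diff_formula:
  "cis x - cis y = 2 * \<i> * complex_of_real (sin ((x-y)/2)) * cis ((x+y)/2)"
proof -
  have x: "x = (x+y)/2 + (x-y)/2" by (simp add: field_simps)
  have y: "y = (x+y)/2 - (x-y)/2" by (simp add: field_simps)
  have "cis x - cis y = cis ((x+y)/2 + (x-y)/2) - cis ((x+y)/2 - (x-y)/2)"
    using x y by metis
  thus ?thesis by (simp only: cis_diff_aux)
qed

lemma Re_mobius:
  fixes a z :: complex
  shows "Re ((a + z) / (a - z)) = ((norm a)^2 - (norm z)^2) / (norm (a - z))^2"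
proof (cases "a = z")
  case True thus ?thesis by simp
next
  case False
  have "(a + z) / (a - z) = (a + z) * cnj (a - z) / ((norm (a - z))^2)"
    using False by (simp add: complex_div_cnj[of "a+z" "a-z"])
  moreover have "Re ((a + z) * cnj (a - z)) = (norm a)^2 - (norm z)^2"
    apply (simp add: cmod_power2)
    apply (simp add: algebra_simps power2_eq_square)
    done
  ultimately show ?thesis by (simp add: Re_divide_of_real[symmetric] del: of_real_power)
qed

lemma mobius_cis:
  fixes x :: real assumes "cos x \<noteq> 1"
  shows "(1 + cis x) / (1 - cis x) = \<i> * complex_of_real (sin x / (1 - cos x))"
proof -
  have ne: "1 - cis x \<noteq> 0" using assms by (auto simp: complex_eq_iff)
  have ne2: "1 - cos x \<noteq> 0" using assms by simp
  have "(1 - cis x) * (\<i> * complex_of_real (sin x / (1 - cos x))) = 1 + cis x"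
  proof -
    have s: "(sin x)^2 = (1 - cos x) * (1 + cos x)" by (simp add: sin_squared_eq algebra_simps power2_eq_square)
    show ?thesis using ne2 s
      by (simp add: complex_eq_iff field_simps power2_eq_square)
  qed
  thus ?thesis using ne by (simp add: field_simps)
qed

lemma mobius_cis2:
  fixes al s :: real assumes "cos (s - al) \<noteq> 1"
  shows "(cis al + cis s) / (cis al - cis s) = \<i> * complex_of_real (sin (s - al) / (1 - cos (s - al)))"
proof -
  have "(cis al + cis s) / (cis al - cis s) = (1 + cis (s - al)) / (1 - cis (s - al))"
  proof -
    have "cis s = cis al * cis (s - al)" by (simp add: cis_mult)
    hence "(cis al + cis s) / (cis al - cis s) = (cis al * (1 + cis (s - al))) / (cis al * (1 - cis (s - al)))"
      by (simp add: algebra_simps)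
    also have "\<dots> = (1 + cis (s - al)) / (1 - cis (s - al))"
      by (rule mult_divide_mult_cancel_left) simp
    finally show ?thesis .
  qed
  thus ?thesis using mobius_cis[OF assms] by simp
qed

definition hh :: "real \<Rightarrow> real" where "hh x = sin x / (1 - cos x)"

lemma hh_periodic: "hh (x + 2*pi) = hh x"
  by (simp add: hh_def)

lemma hh_decreasing:
  assumes "0 < x" "x < y" "y < 2*pi" shows "hh y < hh x"
proof -
  have "hh x > hh y"
  proof (rule DERIV_neg_imp_decreasing[OF assms(2)])
    fix u assume u: "x \<le> u" "u \<le> y"
    have c: "1 - cos u > 0" using u assms by (intro one_minus_cos_pos) auto
    have "DERIV hh u :> (cos u * (1 - cos u) - sin u * sin u) / (1 - cos u)^2"
      unfolding hh_def using c
      by (auto intro!: derivative_eq_intros simp: power2_eq_square)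
    moreover have "(cos u * (1 - cos u) - sin u * sin u) / (1 - cos u)^2 < 0"
    proof -
      have "cos u * (1 - cos u) - sin u * sin u = cos u - 1"
        using sin_cos_squared_add[of u] by (simp add: algebra_simps power2_eq_square)
      thus ?thesis using c by (simp add: divide_neg_pos)
    qed
    ultimately show "\<exists>d. DERIV hh u :> d \<and> d < 0" by blast
  qed
  thus ?thesis by simp
qed

lemma prod_neg_sign:
  fixes f :: "nat \<Rightarrow> real"
  assumes "finite A" "\<And>x. x \<in> A \<Longrightarrow> f x < 0"
  shows "(-1)^card A * prod f A > 0"
  using assms
proof (induction A rule: finite_induct)
  case empty thus ?case by simp
next
  case (insert x A)
  have "(-1)^card (insert x A) * prod f (insert x A) = (-f x) * ((-1)^card A * prod f A)"
    using insert by (simp add: algebra_simps)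
  moreover have "-f x > 0" using insert by simp
  moreover have "0 < (-1)^card A * prod f A" using insert by auto
  ultimately show ?case using insert by (metis mult_pos_pos)
qed

lemma Arg_ii_pos: "g > 0 \<Longrightarrow> Arg (\<i> * complex_of_real g) = pi/2"
  using Arg_times_of_real2[of g \<i>] by simp

lemma Arg_ii_neg: "g < 0 \<Longrightarrow> Arg (\<i> * complex_of_real g) = - (pi/2)"
  using Arg_times_of_real2[of "-g" "-\<i>"] by simp

lemma alg1:
  fixes Z q1 q2 c A k ct :: complex
  assumes "Z \<noteq> 0" "q2 \<noteq> 0" "c \<noteq> 0" "A \<noteq> 0"
  shows "- (k * (2*\<i>*Z*q1*(ct*c*A)) / (Z*q2*c)) / (2*A) = - (k*\<i>*ct) * q1 / q2"
  using assms by (simp add: field_simps)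
lemma alg2:
  fixes m a bj k P D :: complex
  assumes "m = - (k * ((a - bj) * P) / D) / (2 * a)" "a \<noteq> 0" "a - bj \<noteq> 0" "D \<noteq> 0"
  shows "m * ((a + bj) / (a - bj)) = - m - k * (P / D)"
  using assms by (simp add: field_simps)



lemma cis_neq:
  assumes "x < y" "y < x + 2*pi" shows "cis x \<noteq> cis y"
proof
  assume "cis x = cis y"
  hence "cis (y - x) = 1" by (simp add: cis_divide[symmetric])
  hence "cos (y - x) = 1" by (simp add: complex_eq_iff)
  moreover have "1 - cos (y - x) > 0" using assms by (intro one_minus_cos_pos) auto
  ultimately show False by simp
qed

lemma prod_cis: "finite A \<Longrightarrow> (\<Prod>x\<in>A. cis (f x)) = cis (\<Sum>x\<in>A. f x)"
  by (induction A rule: finite_induct) (auto simp: cis_mult)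

lemma sin_half_pos: "0 < x \<Longrightarrow> x < 2*pi \<Longrightarrow> sin (x/2) > 0"
  by (intro sin_gt_zero) auto

lemma sin_half_neg: "-2*pi < x \<Longrightarrow> x < 0 \<Longrightarrow> sin (x/2) < 0"
  using sin_half_pos[of "-x"] by simp

locale steps =
  fixes t :: "nat \<Rightarrow> real" and N :: nat
  assumes Npos: "N > 0"
    and incr: "\<And>j. j < 2*N \<Longrightarrow> t j < t (Suc j)"
    and period: "t (2*N) = t 0 + 2*pi"
begin

lemma tmono: "i < j \<Longrightarrow> j \<le> 2*N \<Longrightarrow> t i < t j"
proof (induction j)
  case 0 thus ?case by simp
next
  case (Suc j)
  have "t j < t (Suc j)" using Suc.prems incr by simp
  thus ?case using Suc by (cases "i = j") auto
qed

lemma tle: "i \<le> j \<Longrightarrow> j \<le> 2*N \<Longrightarrow> t i \<le> t j"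
  using tmono by (cases "i = j") (auto intro: less_imp_le)

definition al where "al k = t (2*k)"
definition be where "be k = t (2*k+1)"
definition a where "a k = cis (al k)"
definition b where "b k = cis (be k)"

lemma al_be_pos: "j < k \<Longrightarrow> k < N \<Longrightarrow> 0 < al k - be j \<and> al k - be j < 2*pi"
proof -
  assume jk: "j < k" "k < N"
  have "t (2*j+1) < t (2*k)" using jk by (intro tmono) auto
  moreover have "t (2*k) < t (2*N)" using jk by (intro tmono) auto
  moreover have "t 0 \<le> t (2*j+1)" using jk by (intro tle) auto
  ultimately show ?thesis using period by (auto simp: al_def be_def)
qed

lemma al_be_neg: "k \<le> j \<Longrightarrow> j < N \<Longrightarrow> -2*pi < al k - be j \<and> al k - be j < 0"
proof -
  assume jk: "k \<le> j" "j < N"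
  have "t (2*k) < t (2*j+1)" using jk by (intro tmono) auto
  moreover have "t (2*j+1) < t (2*N)" using jk by (intro tmono) auto
  moreover have "t 0 \<le> t (2*k)" using jk by (intro tle) auto
  ultimately show ?thesis using period by (auto simp: al_def be_def)
qed

lemma al_al_pos: "l < k \<Longrightarrow> k < N \<Longrightarrow> 0 < al k - al l \<and> al k - al l < 2*pi"
proof -
  assume jk: "l < k" "k < N"
  have "t (2*l) < t (2*k)" using jk by (intro tmono) auto
  moreover have "t (2*k) < t (2*N)" using jk by (intro tmono) auto
  moreover have "t 0 \<le> t (2*l)" using jk by (intro tle) auto
  ultimately show ?thesis using period by (auto simp: al_def be_def)
qed

lemma a_inj: "inj_on a {..<N}"
proof (rule inj_onI)
  fix k l assume kl: "k \<in> {..<N}" "l \<in> {..<N}" "a k = a l"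
  show "k = l"
  proof (rule ccontr)
    assume "k \<noteq> l"
    then consider "l < k" | "k < l" by linarith
    thus False
    proof cases
      case 1 with al_al_pos[of l k] kl cis_neq[of "al l" "al k"] show False by (auto simp: a_def)
    next
      case 2 with al_al_pos[of k l] kl cis_neq[of "al k" "al l"] show False by (auto simp: a_def)
    qed
  qed
qed

lemma a_ne_b: "k < N \<Longrightarrow> j < N \<Longrightarrow> a k \<noteq> b j"
proof -
  assume kj: "k < N" "j < N"
  show ?thesis
  proof (cases "j < k")
    case True with al_be_pos[of j k] kj cis_neq[of "be j" "al k"] show ?thesis by (auto simp: a_def b_def)
  next
    case False with al_be_neg[of k j] kj cis_neq[of "al k" "be j"] show ?thesis by (auto simp: a_def b_def)
  qed
qed

definition S1 where "S1 k = (\<Prod>j<N. sin ((al k - be j)/2))"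
definition S2 where "S2 k = (\<Prod>l\<in>{..<N}-{k}. sin ((al k - al l)/2))"
definition m where "m k = - S1 k / S2 k"

lemma m_pos: assumes k: "k < N" shows "m k > 0"
proof -
  have u1: "{..<N} = {..<k} \<union> {k..<N}" using k by auto
  have P1: "(\<Prod>j<k. sin ((al k - be j)/2)) > 0"
    by (rule prod_pos) (use al_be_pos k in \<open>auto intro: sin_half_pos\<close>)
  have Q1: "(-1)^(N-k) * (\<Prod>j\<in>{k..<N}. sin ((al k - be j)/2)) > 0"
  proof -
    have "\<And>j. j \<in> {k..<N} \<Longrightarrow> sin ((al k - be j)/2) < 0"
    proof -
      fix j assume "j \<in> {k..<N}"
      hence "k \<le> j" "j < N" by auto
      from al_be_neg[OF this] show "sin ((al k - be j)/2) < 0" by (intro sin_half_neg) auto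
    qed
    thus ?thesis using prod_neg_sign[of "{k..<N}" "\<lambda>j. sin ((al k - be j)/2)"] by simp
  qed
  have S1e: "S1 k = (\<Prod>j<k. sin ((al k - be j)/2)) * (\<Prod>j\<in>{k..<N}. sin ((al k - be j)/2))"
    unfolding S1_def by (subst u1, rule prod.union_disjoint) auto
  have u2: "{..<N} - {k} = {..<k} \<union> {Suc k..<N}" using k by auto
  have P2: "(\<Prod>j<k. sin ((al k - al j)/2)) > 0"
    by (rule prod_pos) (use al_al_pos k in \<open>auto intro: sin_half_pos\<close>)
  have Q2: "(-1)^(N-Suc k) * (\<Prod>j\<in>{Suc k..<N}. sin ((al k - al j)/2)) > 0"
  proof -
    have "\<And>j. j \<in> {Suc k..<N} \<Longrightarrow> sin ((al k - al j)/2) < 0"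
    proof -
      fix j assume "j \<in> {Suc k..<N}"
      hence "k < j" "j < N" by auto
      from al_al_pos[OF this] show "sin ((al k - al j)/2) < 0" by (intro sin_half_neg) auto
    qed
    thus ?thesis using prod_neg_sign[of "{Suc k..<N}" "\<lambda>j. sin ((al k - al j)/2)"] by simp
  qed
  have S2e: "S2 k = (\<Prod>j<k. sin ((al k - al j)/2)) * (\<Prod>j\<in>{Suc k..<N}. sin ((al k - al j)/2))"
    unfolding S2_def by (subst u2, rule prod.union_disjoint) auto
  have sg: "(-1::real)^(N-k) = - ((-1)^(N - Suc k))"
  proof -
    have "N - k = Suc (N - Suc k)" using k by simp
    thus ?thesis by simp
  qed
  define A1 where "A1 = (\<Prod>j\<in>{k..<N}. sin ((al k - be j)/2))"
  define A2 where "A2 = (\<Prod>j\<in>{Suc k..<N}. sin ((al k - al j)/2))"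
  define e where "e = ((-1::real)^(N - Suc k))"
  have e2: "e * e = 1" unfolding e_def by (simp flip: power_mult_distrib)
  have "m k = - ((\<Prod>j<k. sin ((al k - be j)/2)) * A1) / ((\<Prod>j<k. sin ((al k - al j)/2)) * A2)"
    unfolding m_def S1e S2e A1_def A2_def ..
  also have "\<dots> = (\<Prod>j<k. sin ((al k - be j)/2)) * (- e * A1) / ((\<Prod>j<k. sin ((al k - al j)/2)) * (e * A2))"
  proof -
    have "e \<noteq> 0" using e2 by auto
    define X where "X = (\<Prod>j<k. sin ((al k - be j)/2))"
    define Y where "Y = (\<Prod>j<k. sin ((al k - al j)/2))"
    have "X * (- e * A1) / (Y * (e * A2)) = (e * (X * (- A1))) / (e * (Y * A2))"
      by (simp add: algebra_simps)
    also have "\<dots> = (X * (- A1)) / (Y * A2)" using \<open>e \<noteq> 0\<close> by (rule mult_divide_mult_cancel_left)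
    finally show ?thesis unfolding X_def Y_def by simp
  qed
  also have "\<dots> > 0"
  proof -
    have "- e * A1 > 0" using Q1 sg unfolding A1_def e_def by simp
    moreover have "e * A2 > 0" using Q2 unfolding A2_def e_def by simp
    ultimately show ?thesis using P1 P2 by (metis divide_pos_pos mult_pos_pos mult_minus_left)
  qed
  finally show ?thesis .
qed

end


context steps begin

definition th where "th = ((\<Sum>j<N. be j) - (\<Sum>l<N. al l))/2"
definition ka where "ka = - \<i> * cis (- th)"
definition r where "r k = ka * (\<Prod>j<N. (a k - b j)) / (\<Prod>l\<in>{..<N}-{k}. (a k - a l))"

lemma S2_ne: "k < N \<Longrightarrow> S2 k \<noteq> 0"
  using m_pos[of k] unfolding m_def by auto

lemma m_eq: assumes k: "k < N" shows "complex_of_real (m k) = - r k / (2 * a k)"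
proof -
  define X1 where "X1 = (\<Sum>j<N. (al k + be j)/2)"
  define X2 where "X2 = (\<Sum>l\<in>{..<N}-{k}. (al k + al l)/2)"
  define Z where "Z = (2*\<i>::complex)^(N-1)"
  have num: "(\<Prod>j<N. (a k - b j)) = (2*\<i>) * Z * complex_of_real (S1 k) * cis X1"
  proof -
    have "(\<Prod>j<N. (a k - b j)) = (\<Prod>j<N. (2*\<i>) * complex_of_real (sin ((al k - be j)/2)) * cis ((al k + be j)/2))"
      unfolding a_def b_def by (simp add: cis_diff_formula)
    also have "\<dots> = (2*\<i>)^N * complex_of_real (S1 k) * cis X1"
      unfolding S1_def X1_def by (simp add: prod.distrib prod_cis)
    also have "(2*\<i>::complex)^N = 2*\<i>*Z"
    proof -
      obtain n where n: "N = Suc n" using Npos by (cases N) auto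
      show ?thesis unfolding Z_def n by simp
    qed
    finally show ?thesis .
  qed
  have den: "(\<Prod>l\<in>{..<N}-{k}. (a k - a l)) = Z * complex_of_real (S2 k) * cis X2"
  proof -
    have "(\<Prod>l\<in>{..<N}-{k}. (a k - a l)) = (\<Prod>l\<in>{..<N}-{k}. (2*\<i>) * complex_of_real (sin ((al k - al l)/2)) * cis ((al k + al l)/2))"
      unfolding a_def by (simp add: cis_diff_formula)
    also have "\<dots> = (2*\<i>)^(card ({..<N}-{k})) * complex_of_real (S2 k) * cis X2"
      unfolding S2_def X2_def by (simp add: prod.distrib prod_cis)
    also have "card ({..<N}-{k}) = N - 1" using k by simp
    finally show ?thesis unfolding Z_def .
  qed
  have X: "X1 = th + X2 + al k"
  proof -
    have "X1 = (real N * al k + (\<Sum>j<N. be j))/2"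
      unfolding X1_def by (simp add: sum.distrib sum_divide_distrib[symmetric])
    moreover have "X2 = (real (N - 1) * al k + ((\<Sum>l<N. al l) - al k))/2"
      unfolding X2_def using k by (simp add: sum.distrib sum_divide_distrib[symmetric] sum_diff1)
    moreover have "real (N - 1) = real N - 1" using Npos by simp
    ultimately show ?thesis unfolding th_def by (simp add: field_simps)
  qed
  have c1: "cis X1 = cis th * cis X2 * a k" unfolding X a_def by (simp add: cis_mult)
  have kk: "ka * \<i> * cis th = 1"
  proof -
    have "ka * \<i> * cis th = -(\<i>*\<i>) * (cis (-th) * cis th)" unfolding ka_def by algebra
    also have "\<dots> = 1" by (simp add: cis_mult)
    finally show ?thesis .
  qed
  have nz: "Z \<noteq> 0" "complex_of_real (S2 k) \<noteq> 0" "cis X2 \<noteq> 0" "a k \<noteq> 0"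
    using S2_ne[OF k] by (auto simp: Z_def a_def)
  have "- r k / (2 * a k) = - (ka * \<i> * cis th) * complex_of_real (S1 k) / complex_of_real (S2 k)"
    unfolding r_def num den c1 using nz by (rule alg1)
  also have "\<dots> = complex_of_real (m k)" unfolding kk m_def by simp
  finally show ?thesis by simp
qed

definition C where "C = ka + (\<Sum>k<N. complex_of_real (m k))"
definition F where "F z = C + (\<Sum>k<N. complex_of_real (m k) * ((a k + z) / (a k - z)))"

lemma F_b: assumes j: "j < N" shows "F (b j) = 0"
proof -
  have trm: "complex_of_real (m k) * ((a k + b j) / (a k - b j)) =
      - complex_of_real (m k) - ka * ((\<Prod>i\<in>{..<N}-{j}. (a k - b i)) / (\<Prod>l\<in>{..<N}-{k}. (a k - a l)))"
    if k: "k < N" for k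
  proof -
    have ne: "a k - b j \<noteq> 0" using a_ne_b[OF k j] by simp
    have an: "a k \<noteq> 0" by (simp add: a_def)
    have pr: "(\<Prod>i<N. (a k - b i)) = (a k - b j) * (\<Prod>i\<in>{..<N}-{j}. (a k - b i))"
      using j by (simp add: prod.remove)
    define D where "D = (\<Prod>l\<in>{..<N}-{k}. (a k - a l))"
    define P where "P = (\<Prod>i\<in>{..<N}-{j}. (a k - b i))"
    have Dn: "D \<noteq> 0" unfolding D_def using a_inj k by (auto dest: inj_onD)
    have "complex_of_real (m k) = - (ka * ((a k - b j) * P) / D) / (2 * a k)"
      using m_eq[OF k] unfolding r_def pr P_def D_def .
    from alg2[OF this an ne Dn]
    have "complex_of_real (m k) * ((a k + b j) / (a k - b j)) = - complex_of_real (m k) - ka * (P / D)" .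
    thus ?thesis unfolding P_def D_def by simp
  qed
  have "F (b j) = C + (\<Sum>k<N. - complex_of_real (m k) - ka * ((\<Prod>i\<in>{..<N}-{j}. (a k - b i)) / (\<Prod>l\<in>{..<N}-{k}. (a k - a l))))"
    unfolding F_def using trm by simp
  also have "\<dots> = C - (\<Sum>k<N. complex_of_real (m k)) - ka * DD a {..<N} (\<lambda>k. \<Prod>i\<in>{..<N}-{j}. (a k - b i))"
    unfolding DD_def by (simp add: sum_subtractf sum_distrib_left sum_negf)
  also have "DD a {..<N} (\<lambda>k. \<Prod>i\<in>{..<N}-{j}. (a k - b i)) = 1"
    using DD_prod[of "{..<N}-{j}" "{..<N}" a b] a_inj j Npos by simp
  finally show ?thesis unfolding C_def by simp
qed

end


lemma lin_prod_poly:
  fixes c d :: "nat \<Rightarrow> complex"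
  assumes "finite A" "\<And>k. k \<in> A \<Longrightarrow> d k \<noteq> 0"
  shows "degree (\<Prod>k\<in>A. [:c k, d k:]) = card A \<and> coeff (\<Prod>k\<in>A. [:c k, d k:]) (card A) = (\<Prod>k\<in>A. d k)"
proof -
  have dg: "degree (\<Prod>k\<in>A. [:c k, d k:]) = card A"
    using assms by (subst degree_prod_eq_sum_degree) auto
  moreover have "lead_coeff (\<Prod>k\<in>A. [:c k, d k:]) = (\<Prod>k\<in>A. d k)"
    using assms by (subst lead_coeff_prod) auto
  ultimately show ?thesis by simp
qed

lemma blaschke_alg:
  fixes lam cc Pz cP Fz V cV zN pa :: complex
  assumes "cc \<noteq> 0" "cV \<noteq> 0" "Fz + 1 \<noteq> 0" "zN \<noteq> 0" "pa \<noteq> 0" "cnj cc \<noteq> 0"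
    and "Pz = (Fz - 1) * V" "cP = (- Fz - 1) * cV" "V = pa * (zN * cV)"
    and "lam = - (cc / cnj cc) / pa"
  shows "lam * ((Pz / cc) / (zN * cP / cnj cc)) = (Fz - 1) / (Fz + 1)"
proof -
  have n2: "cP = - ((Fz + 1) * cV)" using assms(8) by algebra
  have "lam * ((Pz / cc) / (zN * cP / cnj cc)) = lam * Pz * cnj cc / (cc * zN * cP)"
    using assms by (simp add: field_simps)
  also have "\<dots> = - (cc / cnj cc) / pa * ((Fz - 1) * (pa * (zN * cV))) * cnj cc / (cc * zN * (- ((Fz + 1) * cV)))"
    unfolding assms(7,9,10) n2 ..
  also have "\<dots> = (Fz - 1) / (Fz + 1)"
  proof -
    define K where "K = cc * zN * cV"
    have K: "K \<noteq> 0" unfolding K_def using assms by simp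
    have d: "cc * zN * (- ((Fz + 1) * cV)) = - (K * (Fz + 1))" unfolding K_def by algebra
    have nm: "- (cc / cnj cc) / pa * ((Fz - 1) * (pa * (zN * cV))) * cnj cc = - (K * (Fz - 1))"
      unfolding K_def using assms by (simp add: field_simps)
    have "- (K * (Fz - 1)) / - (K * (Fz + 1)) = (Fz - 1) / (Fz + 1)" using K by simp
    thus ?thesis unfolding d nm .
  qed
  finally show ?thesis .
qed

lemma Re_ofr: "Re (complex_of_real r * w) = r * Re w" by simp

lemma cayley_alg:
  fixes Fz :: complex assumes "Fz + 1 \<noteq> 0"
  shows "(1 + (Fz - 1) / (Fz + 1)) / (1 - (Fz - 1) / (Fz + 1)) = Fz"
proof -
  have "1 + (Fz - 1) / (Fz + 1) = 2 * Fz / (Fz + 1)" using assms by (simp add: field_simps)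
  moreover have "1 - (Fz - 1) / (Fz + 1) = 2 / (Fz + 1)" using assms by (simp add: field_simps)
  ultimately show ?thesis using assms by simp
qed

context steps begin

lemma norm_a: "norm (a k) = 1" by (simp add: a_def)
lemma norm_b: "norm (b k) = 1" by (simp add: b_def)

lemma Re_F: "Re (F z) = Re C + (\<Sum>k<N. m k * ((1 - (norm z)^2) / (norm (a k - z))^2))"
  unfolding F_def by (simp only: plus_complex.sel Re_sum Re_ofr Re_mobius norm_a) simp

lemma Re_C: "Re C = 0"
proof -
  have "Re (F (b 0)) = 0" using F_b Npos by simp
  thus ?thesis unfolding Re_F norm_b by simp
qed

lemma Re_F_circle: "norm z = 1 \<Longrightarrow> Re (F z) = 0"
  unfolding Re_F Re_C by simp

lemma F_one_disc: assumes "F w = 1" shows "norm w < 1"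
proof (rule ccontr)
  assume "\<not> norm w < 1"
  hence "(norm w)^2 \<ge> 1" by (simp add: one_le_power)
  have "\<forall>k<N. m k * ((1 - (norm w)^2) / (norm (a k - w))^2) \<le> 0"
  proof (intro allI impI)
    fix k assume "k < N"
    hence "m k \<ge> 0" using m_pos[of k] by simp
    moreover have "(1 - (norm w)^2) / (norm (a k - w))^2 \<le> 0"
      using \<open>(norm w)^2 \<ge> 1\<close> by (intro divide_nonpos_nonneg) auto
    ultimately show "m k * ((1 - (norm w)^2) / (norm (a k - w))^2) \<le> 0" by (rule mult_nonneg_nonpos)
  qed
  hence "Re (F w) \<le> 0" unfolding Re_F Re_C by (auto intro: sum_nonpos)
  thus False using assms by simp
qed

definition sg where "sg k l = (if l = k then 1 else (-1::complex))"

definition P where "P = smult (C - 1) (\<Prod>l<N. [:a l, -1:]) +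
   (\<Sum>k<N. smult (complex_of_real (m k)) (\<Prod>l<N. [:a l, sg k l:]))"

lemma poly_P: "poly P z = (C - 1) * (\<Prod>l<N. (a l - z)) + (\<Sum>k<N. complex_of_real (m k) * (\<Prod>l<N. (a l + sg k l * z)))"
  unfolding P_def by (simp add: poly_prod poly_sum mult.commute)

lemma prod_sg: "k < N \<Longrightarrow> (\<Prod>l<N. (a l + sg k l * z)) = (a k + z) * (\<Prod>l\<in>{..<N}-{k}. (a l - z))"
  by (simp add: prod.remove sg_def)

lemma poly_P_F: assumes "\<And>k. k < N \<Longrightarrow> z \<noteq> a k"
  shows "poly P z = (F z - 1) * (\<Prod>l<N. (a l - z))"
proof -
  have "(\<Sum>k<N. complex_of_real (m k) * (\<Prod>l<N. (a l + sg k l * z))) =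
        (\<Sum>k<N. complex_of_real (m k) * ((a k + z) / (a k - z))) * (\<Prod>l<N. (a l - z))"
    unfolding sum_distrib_right
  proof (rule sum.cong[OF refl])
    fix k assume k: "k \<in> {..<N}"
    have ne: "a k - z \<noteq> 0" using assms k by auto
    have "(\<Prod>l<N. (a l - z)) = (a k - z) * (\<Prod>l\<in>{..<N}-{k}. (a l - z))" using k by (simp add: prod.remove)
    thus "complex_of_real (m k) * (\<Prod>l<N. (a l + sg k l * z)) =
         complex_of_real (m k) * ((a k + z) / (a k - z)) * (\<Prod>l<N. (a l - z))"
      using prod_sg[of k z] k ne by simp
  qed
  note e = this
  have "poly P z = (C - 1) * (\<Prod>l<N. (a l - z)) + (\<Sum>k<N. complex_of_real (m k) * (\<Prod>l<N. (a l + sg k l * z)))"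
    by (rule poly_P)
  also note e
  finally have "poly P z = (C - 1) * (\<Prod>l<N. (a l - z)) + (\<Sum>k<N. complex_of_real (m k) * ((a k + z) / (a k - z))) * (\<Prod>l<N. (a l - z))" .
  thus ?thesis unfolding F_def by (simp add: algebra_simps)
qed

lemma poly_P_a: assumes k: "k < N" shows "poly P (a k) \<noteq> 0"
proof -
  have z1: "(\<Prod>l<N. (a l - a k)) = 0" using k by (intro prod_zero) auto
  have z3: "(\<Sum>k'\<in>{..<N}-{k}. complex_of_real (m k') * (\<Prod>l<N. (a l + sg k' l * a k))) = 0"
  proof (rule sum.neutral, rule ballI)
    fix k' assume "k' \<in> {..<N}-{k}"
    hence "(\<Prod>l<N. (a l + sg k' l * a k)) = 0" using k by (intro prod_zero) (auto intro!: bexI[of _ k] simp: sg_def)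
    thus "complex_of_real (m k') * (\<Prod>l<N. (a l + sg k' l * a k)) = 0" by simp
  qed
  have z2: "(\<Sum>k'<N. complex_of_real (m k') * (\<Prod>l<N. (a l + sg k' l * a k))) =
      complex_of_real (m k) * (\<Prod>l<N. (a l + sg k l * a k))"
    using k z3 by (simp add: sum.remove)
  have nz: "(\<Prod>l<N. (a l + sg k l * a k)) \<noteq> 0"
  proof -
    have "(\<Prod>l\<in>{..<N}-{k}. (a l - a k)) \<noteq> 0" using a_inj k by (auto dest: inj_onD)
    moreover have "a k + a k \<noteq> 0" by (simp add: a_def)
    ultimately show ?thesis using prod_sg[OF k, of "a k"] by simp
  qed
  have "poly P (a k) = complex_of_real (m k) * (\<Prod>l<N. (a l + sg k l * a k))"
    unfolding poly_P z1 z2 by simp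
  thus ?thesis using nz m_pos[OF k] by simp
qed

lemma Re_ka: "Re ka < 0"
proof -
  have "Re ka = Re C - (\<Sum>k<N. m k)" unfolding C_def by simp
  moreover have "(\<Sum>k<N. m k) > 0" using Npos m_pos by (intro sum_pos) auto
  ultimately show ?thesis using Re_C by simp
qed

lemma P_degree: "degree P = N \<and> coeff P N = (-1)^N * (ka - 1)"
proof -
  have d1: "degree (\<Prod>l<N. [:a l, -1:]) = N \<and> coeff (\<Prod>l<N. [:a l, -1:]) N = (-1)^N"
    using lin_prod_poly[of "{..<N}" "\<lambda>_. -1" a] by simp
  have d2: "degree (\<Prod>l<N. [:a l, sg k l:]) = N \<and> coeff (\<Prod>l<N. [:a l, sg k l:]) N = - ((-1)^N)"
    if k: "k < N" for k
  proof -
    have "(\<Prod>l<N. sg k l) = (\<Prod>l\<in>{..<N}-{k}. sg k l)" using k by (simp add: prod.remove sg_def)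
    also have "\<dots> = (\<Prod>l\<in>{..<N}-{k}. -1)" by (rule prod.cong) (auto simp: sg_def)
    also have "\<dots> = (-1)^(N-1)" using k by simp
    also have "\<dots> = - ((-1)^N)" using Npos by (cases N) auto
    finally have "(\<Prod>l<N. sg k l) = - ((-1)^N)" .
    thus ?thesis using lin_prod_poly[of "{..<N}" "sg k" a] by (simp add: sg_def)
  qed
  have le: "degree P \<le> N"
    unfolding P_def using d1 d2
    by (intro degree_add_le degree_sum_le order.trans[OF degree_smult_le]) auto
  have "coeff P N = (C - 1) * (-1)^N + (\<Sum>k<N. complex_of_real (m k) * - ((-1)^N))"
    unfolding P_def using d1 d2 by (simp add: coeff_sum)
  also have "\<dots> = (-1)^N * (C - (\<Sum>k<N. complex_of_real (m k)) - 1)"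
  proof -
    have "(\<Sum>k<N. complex_of_real (m k) * - ((-1)^N)) = - ((-1)^N) * (\<Sum>k<N. complex_of_real (m k))"
      by (simp add: sum_distrib_left mult.commute)
    thus ?thesis by (simp add: algebra_simps)
  qed
  also have "\<dots> = (-1)^N * (ka - 1)" unfolding C_def by simp
  finally have cN: "coeff P N = (-1)^N * (ka - 1)" .
  have "ka - 1 \<noteq> 0" using Re_ka by auto
  hence "coeff P N \<noteq> 0" using cN by simp
  hence "N \<le> degree P" by (rule le_degree)
  thus ?thesis using le cN by simp
qed

end


lemma zcnj1: "norm z = 1 \<Longrightarrow> z * cnj z = 1"
  using complex_norm_square[of z] by simp

context steps begin

lemma cnjF: "norm z = 1 \<Longrightarrow> cnj (F z) = - F z"
  using Re_F_circle[of z] by (simp add: complex_eq_iff)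

lemma omega_exists:
  "\<exists>\<omega>. finite_blaschke_product N \<omega> \<and>
     (\<forall>z. norm z = 1 \<longrightarrow> (\<forall>k<N. z \<noteq> a k) \<longrightarrow> (1 + \<omega> z) / (1 - \<omega> z) = F z)"
proof -
  obtain w where dec0: "smult (lead_coeff P) (\<Prod>i<degree P. [:-w i, 1:]) = P"
    using complex_poly_decompose' by blast
  define cc where "cc = lead_coeff P"
  have degP: "degree P = N" using P_degree by simp
  have dec: "smult cc (\<Prod>i<N. [:-w i, 1:]) = P" using dec0 degP unfolding cc_def by simp
  have ccn: "cc \<noteq> 0"
  proof -
    have "ka - 1 \<noteq> 0" using Re_ka by auto
    thus ?thesis unfolding cc_def using P_degree by simp
  qed
  have polyP: "poly P z = cc * (\<Prod>i<N. (z - w i))" for z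
    by (subst dec[symmetric]) (simp add: poly_prod)
  have wdisc: "norm (w i) < 1" if i: "i < N" for i
  proof -
    have p0: "poly P (w i) = 0" unfolding polyP using i by (simp add: prod_zero_iff) blast
    have na: "w i \<noteq> a k" if k: "k < N" for k
    proof
      assume "w i = a k"
      thus False using poly_P_a[OF k] p0 by simp
    qed
    have "(F (w i) - 1) * (\<Prod>l<N. (a l - w i)) = 0" using p0 poly_P_F[OF na] by simp
    moreover have "(\<Prod>l<N. (a l - w i)) \<noteq> 0"
    proof -
      have "a l - w i \<noteq> 0" if "l < N" for l using na[OF that] by (metis right_minus_eq)
      thus ?thesis by simp
    qed
    ultimately have "F (w i) = 1" by simp
    thus ?thesis by (rule F_one_disc)
  qed
  define pa where "pa = (\<Prod>k<N. - a k)"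
  have pan: "norm pa = 1" unfolding pa_def by (simp add: prod_norm[symmetric] norm_a)
  hence pa0: "pa \<noteq> 0" by auto
  define lam where "lam = - (cc / cnj cc) / pa"
  have laml: "norm lam = 1" unfolding lam_def using ccn pan pa0 by (simp add: norm_divide norm_mult)
  define \<omega> where "\<omega> = (\<lambda>z. lam * (\<Prod>k<N. blaschke_factor (w k) z))"
  have fbp: "finite_blaschke_product N \<omega>"
    unfolding finite_blaschke_product_def \<omega>_def using laml wdisc by blast
  have circ: "(1 + \<omega> z) / (1 - \<omega> z) = F z" if z: "norm z = 1" and na: "\<forall>k<N. z \<noteq> a k" for z
  proof -
    define V where "V = (\<Prod>l<N. (a l - z))"
    have V0: "V \<noteq> 0" unfolding V_def using na by auto
    have F1: "F z + 1 \<noteq> 0"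
    proof
      assume "F z + 1 = 0"
      hence "Re (F z) = -1" by (simp add: complex_eq_iff)
      thus False using Re_F_circle[OF z] by simp
    qed
    have zc: "z * cnj z = 1" using zcnj1[OF z] .
    have Pz: "poly P z = (F z - 1) * V" unfolding V_def using poly_P_F na by auto
    have cP: "cnj (poly P z) = (- F z - 1) * cnj V" unfolding Pz using cnjF[OF z] by simp
    have VV: "V = pa * (z^N * cnj V)"
    proof -
      have "V = (\<Prod>l<N. (- a l) * (z * cnj (a l - z)))"
        unfolding V_def
      proof (rule prod.cong[OF refl])
        fix l
        have al: "a l * cnj (a l) = 1" using zcnj1[OF norm_a] .
        have "(- a l) * (z * cnj (a l - z)) = - (a l * cnj (a l)) * z + a l * (z * cnj z)"
          unfolding complex_cnj_diff by algebra
        thus "a l - z = (- a l) * (z * cnj (a l - z))"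
          using al zc by simp
      qed
      also have "\<dots> = pa * (z^N * cnj V)"
        unfolding prod.distrib pa_def V_def cnj_prod by simp
      finally show ?thesis .
    qed
    have den: "(\<Prod>k<N. (1 - cnj (w k) * z)) = z^N * cnj (poly P z) / cnj cc"
    proof -
      have "(\<Prod>k<N. (1 - cnj (w k) * z)) = (\<Prod>k<N. z * cnj (z - w k))"
      proof (rule prod.cong[OF refl])
        fix k
        have "z * cnj (z - w k) = z * cnj z - cnj (w k) * z" unfolding complex_cnj_diff by algebra
        thus "1 - cnj (w k) * z = z * cnj (z - w k)" using zc by simp
      qed
      also have "\<dots> = z^N * cnj (\<Prod>k<N. (z - w k))" by (simp add: prod.distrib)
      also have "(\<Prod>k<N. (z - w k)) = poly P z / cc" unfolding polyP using ccn by simp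
      finally show ?thesis by simp
    qed
    have num: "(\<Prod>k<N. (z - w k)) = poly P z / cc" unfolding polyP using ccn by simp
    have "\<omega> z = lam * ((poly P z / cc) / (z^N * cnj (poly P z) / cnj cc))"
      unfolding \<omega>_def blaschke_factor_def prod_dividef num den ..
    also have "\<dots> = (F z - 1) / (F z + 1)"
      by (rule blaschke_alg[OF ccn _ F1 _ pa0 _ Pz cP VV lam_def]) (use V0 z ccn in auto)
    finally show ?thesis using cayley_alg[OF F1] by simp
  qed
  show ?thesis using fbp circ by blast
qed

end


context steps begin

definition GG where "GG s = Im C + (\<Sum>k<N. m k * hh (s - al k))"

lemma F_circle: assumes "\<forall>k<N. cos (s - al k) \<noteq> 1"
  shows "F (cis s) = \<i> * complex_of_real (GG s)"
proof -
  have "F (cis s) = C + (\<Sum>k<N. complex_of_real (m k) * (\<i> * complex_of_real (hh (s - al k))))"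
    unfolding F_def a_def using assms by (simp add: mobius_cis2 hh_def)
  also have "C = \<i> * complex_of_real (Im C)" using Re_C by (simp add: complex_eq_iff)
  finally show ?thesis unfolding GG_def by (simp add: sum_distrib_left algebra_simps)
qed

lemma arc_facts:
  assumes k: "k < N" and s: "t (2*k) < s" "s < t (2*k+2)" and l: "l < N"
  shows "cos (s - al l) \<noteq> 1 \<and>
    (if l \<le> k then 0 < s - al l \<and> s - al l < 2*pi else 0 < s - al l + 2*pi \<and> s - al l + 2*pi < 2*pi)"
proof -
  have t0: "t 0 \<le> t (2*k)" using k by (intro tle) auto
  have t2: "t (2*k+2) \<le> t (2*N)" using k by (intro tle) auto
  have r: "if l \<le> k then 0 < s - al l \<and> s - al l < 2*pi else 0 < s - al l + 2*pi \<and> s - al l + 2*pi < 2*pi"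
  proof (cases "l \<le> k")
    case True
    have "t (2*l) \<le> t (2*k)" using True k by (intro tle) auto
    moreover have "t 0 \<le> t (2*l)" using l by (intro tle) auto
    ultimately show ?thesis using True s t2 period by (auto simp: al_def)
  next
    case False
    have "t (2*k+2) \<le> t (2*l)" using False l by (intro tle) auto
    moreover have "t (2*l) < t (2*N)" using l by (intro tmono) auto
    ultimately show ?thesis using False s t0 period by (auto simp: al_def)
  qed
  have "cos (s - al l) \<noteq> 1"
  proof (cases "l \<le> k")
    case True
    with r have "1 - cos (s - al l) > 0" by (intro one_minus_cos_pos) auto
    thus ?thesis by simp
  next
    case False
    with r have "1 - cos (s - al l + 2*pi) > 0" by (intro one_minus_cos_pos) auto
    thus ?thesis by simp
  qed
  with r show ?thesis by simp
qed

lemma GG_decr: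
  assumes k: "k < N" and s: "t (2*k) < s1" "s1 < s2" "s2 < t (2*k+2)"
  shows "GG s2 < GG s1"
proof -
  have "(\<Sum>l<N. m l * hh (s2 - al l)) < (\<Sum>l<N. m l * hh (s1 - al l))"
  proof (rule sum_strict_mono)
    show "{..<N} \<noteq> {}" using Npos by auto
  next
    show "finite {..<N}" by simp
  next
    fix l assume "l \<in> {..<N}"
    hence l: "l < N" by simp
    have A1: "if l \<le> k then 0 < s1 - al l \<and> s1 - al l < 2*pi else 0 < s1 - al l + 2*pi \<and> s1 - al l + 2*pi < 2*pi"
      using arc_facts[OF k s(1) _ l] s by auto
    have A2: "if l \<le> k then 0 < s2 - al l \<and> s2 - al l < 2*pi else 0 < s2 - al l + 2*pi \<and> s2 - al l + 2*pi < 2*pi"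
      using arc_facts[OF k _ s(3) l] s by auto
    have "hh (s2 - al l) < hh (s1 - al l)"
    proof (cases "l \<le> k")
      case True
      thus ?thesis using A1 A2 s by (intro hh_decreasing) auto
    next
      case False
      have "hh (s2 - al l + 2*pi) < hh (s1 - al l + 2*pi)"
        using False A1 A2 s by (intro hh_decreasing) auto
      thus ?thesis by (simp add: hh_periodic)
    qed
    thus "m l * hh (s2 - al l) < m l * hh (s1 - al l)"
      using m_pos[OF l] by (rule mult_strict_left_mono)
  qed
  thus ?thesis unfolding GG_def by simp
qed

lemma GG_be: assumes k: "k < N" shows "GG (be k) = 0"
proof -
  have s: "t (2*k) < be k" "be k < t (2*k+2)" unfolding be_def using k by (auto intro: tmono)
  have "\<forall>l<N. cos (be k - al l) \<noteq> 1" using arc_facts[OF k s] by blast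
  from F_circle[OF this] have "F (b k) = \<i> * complex_of_real (GG (be k))" by (simp add: b_def)
  thus ?thesis using F_b[OF k] by simp
qed

lemma arc_Arg:
  assumes j: "j < 2*N" and s: "t j < s" "s < t (Suc j)"
  shows "(\<forall>l<N. cis s \<noteq> a l) \<and> Arg (F (cis s)) = (-1)^j * (pi/2)"
proof -
  define k where "k = j div 2"
  have k: "k < N" unfolding k_def using j by simp
  have jk: "j = 2*k \<or> j = 2*k+1" unfolding k_def by presburger
  have sk: "t (2*k) < s" "s < t (2*k+2)"
  proof -
    have "t (2*k) \<le> t j" using jk j by (intro tle) auto
    thus "t (2*k) < s" using s by simp
    have "t (Suc j) \<le> t (2*k+2)" using jk k by (intro tle) auto
    thus "s < t (2*k+2)" using s by simp
  qed
  have cs: "\<forall>l<N. cos (s - al l) \<noteq> 1" using arc_facts[OF k sk] by blast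
  have na: "\<forall>l<N. cis s \<noteq> a l"
  proof (intro allI impI)
    fix l assume l: "l < N"
    show "cis s \<noteq> a l"
    proof
      assume "cis s = a l"
      hence "cis (s - al l) = 1" by (simp add: a_def cis_divide[symmetric])
      hence "cos (s - al l) = 1" by (simp add: complex_eq_iff)
      thus False using cs l by simp
    qed
  qed
  have be: "t (2*k) < be k" "be k < t (2*k+2)" unfolding be_def using k by (auto intro: tmono)
  have "Arg (F (cis s)) = (-1)^j * (pi/2)"
  proof (cases "j = 2*k")
    case True
    hence "s < be k" using s by (simp add: be_def)
    hence "GG (be k) < GG s" using GG_decr[OF k sk(1) _ be(2)] by simp
    hence "GG s > 0" using GG_be[OF k] by simp
    thus ?thesis using F_circle[OF cs] True Arg_ii_pos by simp
  next
    case False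
    hence jj: "j = 2*k+1" using jk by simp
    hence "be k < s" using s by (simp add: be_def)
    hence "GG s < GG (be k)" using GG_decr[OF k be(1) _ sk(2)] by simp
    hence "GG s < 0" using GG_be[OF k] by simp
    thus ?thesis using F_circle[OF cs] jj Arg_ii_neg by simp
  qed
  with na show ?thesis by simp
qed

lemma core:
  "\<exists>\<omega>. finite_blaschke_product N \<omega> \<and>
     (\<forall>s j. j < 2*N \<longrightarrow> t j < s \<longrightarrow> s < t (Suc j) \<longrightarrow>
        Arg ((1 + \<omega> (cis s)) / (1 - \<omega> (cis s))) = (-1)^j * (pi/2))"
proof -
  obtain \<omega> where w: "finite_blaschke_product N \<omega>"
    "\<And>z. norm z = 1 \<Longrightarrow> (\<forall>k<N. z \<noteq> a k) \<Longrightarrow> (1 + \<omega> z) / (1 - \<omega> z) = F z"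
    using omega_exists by blast
  have "Arg ((1 + \<omega> (cis s)) / (1 - \<omega> (cis s))) = (-1)^j * (pi/2)"
    if "j < 2*N" "t j < s" "s < t (Suc j)" for s j
    using arc_Arg[OF that] w(2)[of "cis s"] by simp
  thus ?thesis using w(1) by blast
qed

end


context steps begin
lemma find_interval:
  assumes "t 0 < x" "x < t (2*N)" "\<And>j. j \<le> 2*N \<Longrightarrow> x \<noteq> t j"
  shows "\<exists>j<2*N. t j < x \<and> x < t (Suc j)"
proof -
  have "\<And>M. M \<le> 2*N \<Longrightarrow> x < t M \<Longrightarrow> \<exists>j<M. t j < x \<and> x < t (Suc j)"
  proof -
    fix M show "M \<le> 2*N \<Longrightarrow> x < t M \<Longrightarrow> \<exists>j<M. t j < x \<and> x < t (Suc j)"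
    proof (induction M)
      case 0 thus ?case using assms(1) by simp
    next
      case (Suc M)
      show ?case
      proof (cases "x < t M")
        case True
        have "M \<le> 2*N" using Suc.prems by simp
        from Suc.IH[OF this True] obtain j where "j < M" "t j < x \<and> x < t (Suc j)" by blast
        thus ?thesis by (intro exI[of _ j]) auto
      next
        case False
        hence "t M < x" using assms(3)[of M] Suc.prems by force
        thus ?thesis using Suc.prems by auto
      qed
    qed
  qed
  from this[OF le_refl assms(2)] show ?thesis .
qed
end

lemma AE_translate:
  assumes "AE s in lborel. Q (s::real)" shows "AE s in lborel. Q (s + d)"
proof -
  from assms obtain N0 where N0: "{x \<in> space lborel. \<not> Q x} \<subseteq> N0" "emeasure lborel N0 = 0" "N0 \<in> sets lborel"
    by (rule AE_E)
  have "N0 \<in> null_sets lborel" using N0 by auto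
  hence "{x. x - (- d) \<in> N0} \<in> null_sets lborel" by (rule null_sets_translation)
  moreover have "{x \<in> space lborel. \<not> Q (x + d)} \<subseteq> {x. x - (- d) \<in> N0}" using N0(1) by auto
  ultimately show ?thesis by (rule AE_I')
qed

theorem theorem5p1:
  fixes c :: real and N :: nat and \<psi> :: "complex \<Rightarrow> real"
  assumes "c > 0" and "N > 0"
    and "alternating_step_function c N \<psi>"
  shows "\<exists>\<omega>. finite_blaschke_product N \<omega> \<and>
           (AE s in lborel. \<psi> (cis s) =
              2 * c / pi * Arg ((1 + \<omega> (cis s)) / (1 - \<omega> (cis s))))"
proof -
  obtain t :: "nat \<Rightarrow> real" where t1: "\<forall>j<2*N. t j < t (Suc j)" and t2: "t (2*N) = t 0 + 2*pi"
    and hyp: "AE s in lborel. \<forall>j<2*N. t j < s \<and> s < t (Suc j) \<longrightarrow> \<psi> (cis s) = (-1) ^ j * c"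
    using assms(3) unfolding alternating_step_function_def by blast
  interpret steps t N using assms(2) t1 t2 by unfold_locales auto
  obtain \<omega> where w1: "finite_blaschke_product N \<omega>" and
    w2: "\<And>s j. j < 2*N \<Longrightarrow> t j < s \<Longrightarrow> s < t (Suc j) \<Longrightarrow>
        Arg ((1 + \<omega> (cis s)) / (1 - \<omega> (cis s))) = (-1)^j * (pi/2)"
    using core by blast
  define Q where "Q s = (\<forall>j<2*N. t j < s \<and> s < t (Suc j) \<longrightarrow> \<psi> (cis s) = (-1) ^ j * c)" for s
  have A1: "AE s in lborel. \<forall>n::int. Q (s + 2*pi * of_int n)"
    unfolding AE_all_countable
  proof
    fix n :: int
    show "AE s in lborel. Q (s + 2*pi * of_int n)"
      using AE_translate[of Q "2*pi * of_int n"] hyp unfolding Q_def by simp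
  qed
  have A2: "AE s in lborel. \<forall>n::int. \<forall>j\<le>2*N. s + 2*pi * of_int n \<noteq> t j"
  proof (rule AE_I')
    let ?S = "(\<lambda>(n::int, j). t j - 2*pi * of_int n) ` (UNIV \<times> {..2*N})"
    show "?S \<in> null_sets lborel"
      by (rule countable_imp_null_set_lborel) auto
    show "{x \<in> space lborel. \<not> (\<forall>n::int. \<forall>j\<le>2*N. x + 2*pi * of_int n \<noteq> t j)} \<subseteq> ?S"
    proof
      fix x assume "x \<in> {x \<in> space lborel. \<not> (\<forall>n::int. \<forall>j\<le>2*N. x + 2*pi * of_int n \<noteq> t j)}"
      then obtain n j where "j \<le> 2*N" "x + 2*pi * of_int n = t j" by auto
      hence "x = t j - 2*pi * of_int n" "(n, j) \<in> UNIV \<times> {..2*N}" by auto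
      thus "x \<in> ?S" by force
    qed
  qed
  have "AE s in lborel. \<psi> (cis s) = 2 * c / pi * Arg ((1 + \<omega> (cis s)) / (1 - \<omega> (cis s)))"
    using A1 A2
  proof eventually_elim
    case (elim s)
    define n where "n = \<lfloor>(s - t 0) / (2*pi)\<rfloor>"
    define s' where "s' = s + 2*pi * of_int (-n)"
    have fl: "of_int n \<le> (s - t 0) / (2*pi)" "(s - t 0) / (2*pi) < of_int n + 1"
      unfolding n_def by linarith+
    have lo: "t 0 \<le> s'" using fl(1) pi_gt_zero unfolding s'_def by (simp add: field_simps)
    have hi: "s' < t 0 + 2*pi" using fl(2) pi_gt_zero unfolding s'_def by (simp add: field_simps)
    have ne: "\<And>j. j \<le> 2*N \<Longrightarrow> s' \<noteq> t j" using elim(2) unfolding s'_def by blast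
    have lo': "t 0 < s'" using lo ne[of 0] by force
    obtain j where j: "j < 2*N" "t j < s'" "s' < t (Suc j)"
      using find_interval[OF lo' _ ne] hi t2 by auto
    have cs: "cis s' = cis s"
    proof -
      have "cis s' = cis (s - 2*pi * of_int n)" unfolding s'_def by simp
      also have "\<dots> = cis s / cis (2*pi * of_int n)" by (rule cis_divide[symmetric])
      also have "cis (2*pi * of_int n) = 1" by (rule cis_multiple_2pi) simp
      finally show ?thesis by simp
    qed
    have "Q (s + 2*pi * of_int (-n))" using elim(1) by blast
    hence "Q s'" unfolding s'_def .
    hence "\<psi> (cis s') = (-1)^j * c" using j unfolding Q_def by blast
    hence "\<psi> (cis s) = (-1)^j * c" using cs by simp
    moreover have "Arg ((1 + \<omega> (cis s)) / (1 - \<omega> (cis s))) = (-1)^j * (pi/2)"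
      using w2[OF j] cs by simp
    ultimately show ?case by (simp only:) (simp add: field_simps)
  qed
  with w1 show ?thesis by blast
qed


end
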